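(* Let $X=[0,1]$ with the usual metric, $U=\{0,1\}$, and let $F_0,F_1:[0,1]\to[0,1]$ be given by $F_0(x)=\frac18$ for $0\le x<\frac14$, $F_0(x)=2x-\frac38$ for $\frac14\le x<\frac38$, $F_0(x)=(x-\frac38)^2+\frac38$ for $\frac38\le x\le1$; and $F_1(x)=0$ for $0\le x<\frac1{16}$, $F_1(x)=2x-\frac18$ for $\frac1{16}\le x<\frac18$, $F_1(x)=\frac14(x-\frac18)^{1/3}+\frac18$ for $\frac18\le x<\frac14$, $F_1(x)=-x+\frac12$ for $\frac14\le x<\frac12$, $F_1(x)=0$ for $\frac12\le x\le1$. Consider the control system $x_{n+1}=F_{u_n}(x_n)$ and let $Q=[\frac14,\frac12]$. Then $Q$ is finitely mean equi-invariant but not mean equi-invariant (the point $\frac38$ is not a mean equi-invariant point of $Q$).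
   Context: For $\omega=(\omega_0,\omega_1,\dots)\in\mathscr U=U^{\mathbb N_0}$ and $x\in X$: $\phi(0,x,\omega)=x$, $\phi(k,x,\omega)=F_{\omega_{k-1}}\circ\cdots\circ F_{\omega_0}(x)$. $d(y,Q)=\inf_{q\in Q}|y-q|$, $B(x,\delta)$ open ball. A point $x\in Q$ is a finitely mean equi-invariant point of $Q$ if for every $\varepsilon>0$ there exist $\delta>0$ and a finite set $F\subset\mathscr U$ such that for every $y\in B(x,\delta)\cap Q$ there is $\omega\in F$ with $\limsup_{n\to\infty}\frac1n\sum_{i=0}^{n-1}d(\phi(i,y,\omega),Q)<\varepsilon$; it is a mean equi-invariant point if this holds with $F$ a singleton. $Q$ is (finitely) mean equi-invariant if all its points are (finitely) mean equi-invariant points. *)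

theory Defs
  imports "HOL-Analysis.Analysis" "HOL-Library.Liminf_Limsup"
begin

primrec phi :: "('u \<Rightarrow> 'a \<Rightarrow> 'a) \<Rightarrow> nat \<Rightarrow> 'a \<Rightarrow> (nat \<Rightarrow> 'u) \<Rightarrow> 'a" where
  "phi F 0 x \<omega> = x"
| "phi F (Suc k) x \<omega> = F (\<omega> k) (phi F k x \<omega>)"

definition controls :: "'u set \<Rightarrow> (nat \<Rightarrow> 'u) set" where
  "controls U = {\<omega>. \<forall>i. \<omega> i \<in> U}"

definition mean_dist :: "('u \<Rightarrow> 'a::metric_space \<Rightarrow> 'a) \<Rightarrow> 'a set \<Rightarrow> 'a \<Rightarrow> (nat \<Rightarrow> 'u) \<Rightarrow> ereal" where
  "mean_dist F Q y \<omega> =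
     limsup (\<lambda>n. ereal ((1 / real n) * (\<Sum>i<n. infdist (phi F i y \<omega>) Q)))"

definition fmei_point :: "('u \<Rightarrow> 'a::metric_space \<Rightarrow> 'a) \<Rightarrow> 'u set \<Rightarrow> 'a set \<Rightarrow> 'a \<Rightarrow> bool" where
  "fmei_point F U Q x \<longleftrightarrow> x \<in> Q \<and>
     (\<forall>\<epsilon>>0. \<exists>\<delta>>0. \<exists>S. finite S \<and> S \<subseteq> controls U \<and>
        (\<forall>y \<in> ball x \<delta> \<inter> Q. \<exists>\<omega>\<in>S. mean_dist F Q y \<omega> < ereal \<epsilon>))"

definition mei_point :: "('u \<Rightarrow> 'a::metric_space \<Rightarrow> 'a) \<Rightarrow> 'u set \<Rightarrow> 'a set \<Rightarrow> 'a \<Rightarrow> bool" where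
  "mei_point F U Q x \<longleftrightarrow> x \<in> Q \<and>
     (\<forall>\<epsilon>>0. \<exists>\<delta>>0. \<exists>\<omega>\<in>controls U.
        (\<forall>y \<in> ball x \<delta> \<inter> Q. mean_dist F Q y \<omega> < ereal \<epsilon>))"

definition fmei_set :: "('u \<Rightarrow> 'a::metric_space \<Rightarrow> 'a) \<Rightarrow> 'u set \<Rightarrow> 'a set \<Rightarrow> bool" where
  "fmei_set F U Q \<longleftrightarrow> (\<forall>x\<in>Q. fmei_point F U Q x)"

definition mei_set :: "('u \<Rightarrow> 'a::metric_space \<Rightarrow> 'a) \<Rightarrow> 'u set \<Rightarrow> 'a set \<Rightarrow> bool" where
  "mei_set F U Q \<longleftrightarrow> (\<forall>x\<in>Q. mei_point F U Q x)"

definition F0 :: "real \<Rightarrow> real" where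
  "F0 x = (if x < 1/4 then 1/8
           else if x < 3/8 then 2*x - 3/8
           else (x - 3/8)^2 + 3/8)"

definition F1 :: "real \<Rightarrow> real" where
  "F1 x = (if x < 1/16 then 0
           else if x < 1/8 then 2*x - 1/8
           else if x < 1/4 then (1/4) * root 3 (x - 1/8) + 1/8
           else if x < 1/2 then - x + 1/2
           else 0)"

definition Fsys :: "nat \<Rightarrow> real \<Rightarrow> real" where
  "Fsys u = (if u = 0 then F0 else F1)"

end

theory Submission imports Defs begin
abbreviation "QQ \<equiv> {1/4..1/2::real}"

lemma infdist_low: assumes "x \<le> 1/8" shows "1/8 \<le> infdist x QQ"
proof -
  have "infdist x QQ = (INF a\<in>QQ. dist x a)" by (rule infdist_notempty) simp
  also have "1/8 \<le> \<dots>"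
    by (rule cINF_greatest) (use assms in \<open>auto simp: dist_real_def\<close>)
  finally show ?thesis .
qed

lemma mean_low:
  assumes "\<forall>i\<ge>N. 1/8 \<le> infdist (phi F i y \<omega>) Q"
  shows "ereal (1/16) \<le> mean_dist F Q y \<omega>"
  unfolding mean_dist_def
proof (rule le_Limsup)
  show "(sequentially::nat filter) \<noteq> bot" by simp
  show "\<forall>\<^sub>F n in sequentially. ereal (1/16) \<le> ereal (1 / real n * (\<Sum>i<n. infdist (phi F i y \<omega>) Q))"
    using eventually_ge_at_top[of "2*N+1"]
  proof eventually_elim
    case (elim n)
    have "(\<Sum>i\<in>{N..<n}. (1/8::real)) \<le> (\<Sum>i\<in>{N..<n}. infdist (phi F i y \<omega>) Q)"
      by (rule sum_mono) (use assms in auto)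
    also have "\<dots> \<le> (\<Sum>i<n. infdist (phi F i y \<omega>) Q)"
      by (rule sum_mono2) (auto simp: infdist_nonneg)
    finally have "real (n - N) / 8 \<le> (\<Sum>i<n. infdist (phi F i y \<omega>) Q)" by simp
    moreover have "real n / 16 \<le> real (n - N) / 8" using elim by (simp add: of_nat_diff)
    ultimately have "real n * (1/16) \<le> (\<Sum>i<n. infdist (phi F i y \<omega>) Q)" by simp
    then have "1/16 \<le> 1 / real n * (\<Sum>i<n. infdist (phi F i y \<omega>) Q)"
      using elim by (simp add: field_simps)
    then show ?case by simp
  qed
qed

lemma mean_zero:
  assumes "(\<lambda>i. infdist (phi F i y \<omega>) Q) \<longlonglongrightarrow> 0" and "\<epsilon> > 0"
  shows "mean_dist F Q y \<omega> < ereal \<epsilon>"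
proof -
  define d where "d i = infdist (phi F i y \<omega>) Q" for i
  have d0: "d i \<ge> 0" for i by (simp add: d_def infdist_nonneg)
  from assms(1) have "d \<longlonglongrightarrow> 0" by (simp add: d_def[abs_def])
  then obtain N where N: "\<And>i. i \<ge> N \<Longrightarrow> d i < \<epsilon>/2"
    using assms(2) by (metis (full_types) LIMSEQ_D abs_of_nonneg d0 diff_zero half_gt_zero real_norm_def)
  define M where "M = (\<Sum>i<N. d i)"
  have M0: "M \<ge> 0" by (simp add: M_def d0 sum_nonneg)
  obtain K where K: "M / (\<epsilon>/4) < real K" using reals_Archimedean2 by blast
  have "mean_dist F Q y \<omega> \<le> ereal (3/4*\<epsilon>)"
    unfolding mean_dist_def
  proof (rule Limsup_bounded)
    show "\<forall>\<^sub>F n in sequentially. ereal (1 / real n * (\<Sum>i<n. infdist (phi F i y \<omega>) Q)) \<le> ereal (3/4*\<epsilon>)"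
      using eventually_ge_at_top[of "N+K+1"]
    proof eventually_elim
      case (elim n)
      have "(\<Sum>i<n. d i) = M + (\<Sum>i\<in>{N..<n}. d i)"
      proof -
        have "{..<n} = {..<N} \<union> {N..<n}" using elim by auto
        then have "sum d {..<n} = sum d ({..<N} \<union> {N..<n})" by simp
        also have "\<dots> = sum d {..<N} + sum d {N..<n}" by (rule sum.union_disjoint) auto
        finally show ?thesis unfolding M_def .
      qed
      also have "(\<Sum>i\<in>{N..<n}. d i) \<le> (\<Sum>i\<in>{N..<n}. \<epsilon>/2)"
        by (rule sum_mono) (use N less_imp_le in auto)
      also have "\<dots> \<le> real n * (\<epsilon>/2)" using assms(2) by simp
      finally have s: "(\<Sum>i<n. d i) \<le> M + real n * (\<epsilon>/2)" by simp
      have "M < real K * (\<epsilon>/4)" using K assms(2) by (simp add: divide_less_eq)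
      also have "real K * (\<epsilon>/4) \<le> real n * (\<epsilon>/4)"
        using elim assms(2) by (intro mult_right_mono) auto
      finally have "M < real n * (\<epsilon>/4)" .
      with s have "(\<Sum>i<n. d i) \<le> real n * (3/4*\<epsilon>)" by simp
      then have "1 / real n * (\<Sum>i<n. d i) \<le> 3/4*\<epsilon>" using elim
        by (simp add: field_simps)
      then show ?case by (simp add: d_def)
    qed
  qed
  also have "\<dots> < ereal \<epsilon>" using assms(2) by simp
  finally show ?thesis .
qed

lemma Fsys_cases: "Fsys u = F0 \<or> Fsys u = F1" by (simp add: Fsys_def)

lemma low_inv: "0 \<le> x \<Longrightarrow> x \<le> 1/8 \<Longrightarrow> 0 \<le> Fsys u x \<and> Fsys u x \<le> 1/8"
  using Fsys_cases[of u] by (auto simp: F0_def F1_def)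

lemma phi_low:
  assumes "0 \<le> phi Fsys i y \<omega>" "phi Fsys i y \<omega> \<le> 1/8" "i \<le> j"
  shows "0 \<le> phi Fsys j y \<omega> \<and> phi Fsys j y \<omega> \<le> 1/8"
  using assms(3)
proof (induction j rule: dec_induct)
  case base then show ?case using assms by simp
next
  case (step j) then show ?case using low_inv by simp
qed

lemma bad_mean:
  assumes "0 \<le> phi Fsys i y \<omega>" "phi Fsys i y \<omega> \<le> 1/8"
  shows "ereal (1/16) \<le> mean_dist Fsys QQ y \<omega>"
  by (rule mean_low[of i]) (use phi_low[OF assms] infdist_low in auto)

lemma hi_inv: "phi Fsys i y (\<lambda>_. 0) \<in> {3/8..1/2}" if "y \<in> {3/8..1/2}"
proof (induction i)
  case 0 then show ?case using that by simp
next
  case (Suc i)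
  define x where "x = phi Fsys i y (\<lambda>_. 0)"
  have "3/8 \<le> x" "x \<le> 1/2" using Suc by (auto simp: x_def)
  moreover have "(x - 3/8)^2 \<le> 1/8"
  proof -
    have "(x-3/8)^2 \<le> (1/8)^2" using \<open>3/8 \<le> x\<close> \<open>x \<le> 1/2\<close> by (intro power_mono) auto
    also have "(1/8::real)^2 = 1/64" by (simp add: power2_eq_square)
    finally show ?thesis by linarith
  qed
  moreover have "phi Fsys (Suc i) y (\<lambda>_. 0) = F0 x" by (simp add: x_def Fsys_def)
  ultimately show ?case by (simp add: F0_def)
qed

lemma root_eighth: "root 3 (1/8) = 1/2"
proof -
  have "root 3 ((1/2)^3) = (1/2::real)" by (rule real_root_power_cancel) auto
  moreover have "(1/2::real)^3 = 1/8" by (simp add: power3_eq_cube)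
  ultimately show ?thesis by simp
qed

lemma F1_step:
  assumes "0 < t" "t \<le> 1/8"
  shows "F1 (1/8 + t) = 1/8 + root 3 t / 4"
proof (cases "t < 1/8")
  case True then show ?thesis using assms by (simp add: F1_def)
next
  case False then have "t = 1/8" using assms by simp
  have "1/8 + t = 1/4" using \<open>t = 1/8\<close> by simp
  moreover have "root 3 t = 1/2" by (subst \<open>t = 1/8\<close>) (rule root_eighth)
  ultimately show ?thesis by (simp add: F1_def)
qed

lemma step_bounds:
  assumes "0 < t" "t \<le> 1/8"
  shows "0 < root 3 t / 4" "root 3 t / 4 \<le> 1/8" "t \<le> root 3 t / 4"
proof -
  show "0 < root 3 t / 4" using assms by simp
  have "root 3 t \<le> root 3 (1/8)" using assms by (subst real_root_le_iff) auto
  then show "root 3 t / 4 \<le> 1/8" by (simp add: root_eighth)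
  have "(4*t)^3 \<le> t"
  proof -
    have "t^2 \<le> (1/8)^2" using assms by (intro power_mono) auto
    also have "(1/8::real)^2 = 1/64" by (simp add: power2_eq_square)
    finally have "64 * t^2 \<le> 1" by linarith
    then have "64 * t^2 * t \<le> 1 * t" using assms by (intro mult_right_mono) auto
    then show ?thesis by (simp add: power_mult_distrib power3_eq_cube power2_eq_square mult.assoc)
  qed
  then have r1: "root 3 ((4*t)^3) \<le> root 3 t" by (subst real_root_le_iff) auto
  have r2: "root 3 ((4*t)^3) = 4*t" using assms by (intro real_root_power_cancel) auto
  from r1 r2 have "4*t \<le> root 3 t" by linarith
  then show "t \<le> root 3 t / 4" by simp
qed

lemma ones_tendsto:
  assumes "1/4 \<le> y" "y < 3/8"
  shows "(\<lambda>i. infdist (phi Fsys i y (\<lambda>_. 1)) QQ) \<longlonglongrightarrow> 0"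
proof -
  define s where "s i = phi Fsys (Suc i) y (\<lambda>_. 1) - 1/8" for i
  have s0: "s 0 = 3/8 - y" using assms by (simp add: s_def Fsys_def F1_def)
  have sb: "0 < s i \<and> s i \<le> 1/8 \<and> s (Suc i) = root 3 (s i) / 4" for i
  proof (induction i)
    case 0
    have "phi Fsys (Suc (Suc 0)) y (\<lambda>_. 1) = F1 (1/8 + s 0)"
      by (simp add: s_def Fsys_def)
    also have "\<dots> = 1/8 + root 3 (s 0) / 4" using assms s0 by (intro F1_step) auto
    finally show ?case using assms s0 by (simp add: s_def)
  next
    case (Suc i)
    have ss: "0 < s (Suc i)" "s (Suc i) \<le> 1/8" using Suc step_bounds[of "s i"] by auto
    have "phi Fsys (Suc (Suc (Suc i))) y (\<lambda>_. 1) = F1 (1/8 + s (Suc i))"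
      by (simp add: s_def Fsys_def)
    also have "\<dots> = 1/8 + root 3 (s (Suc i)) / 4" using ss by (intro F1_step) auto
    finally show ?case using ss by (simp add: s_def)
  qed
  have inc: "incseq s"
  proof (rule incseq_SucI)
    fix n
    have "s n \<le> root 3 (s n) / 4" using sb[of n] step_bounds(3)[of "s n"] by auto
    then show "s n \<le> s (Suc n)" using sb[of n] by simp
  qed
  have bdd: "s i \<le> 1/8" for i using sb by auto
  obtain L where L: "s \<longlonglongrightarrow> L"
    using incseq_convergent[OF inc, of "1/8"] bdd by blast
  have L1: "L \<le> 1/8" by (rule LIMSEQ_le_const2[OF L]) (use bdd in auto)
  have L0: "s 0 \<le> L" using incseq_le[OF inc L] by blast
  have Lpos: "0 < L" using sb[of 0] L0 by linarith
  have "(\<lambda>i. s (Suc i)) \<longlonglongrightarrow> L" using L by (rule LIMSEQ_Suc)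
  moreover have "(\<lambda>i. s (Suc i)) \<longlonglongrightarrow> root 3 L / 4"
    unfolding sb[THEN conjunct2, THEN conjunct2]
    by (auto intro!: tendsto_intros L)
  ultimately have fixL: "L = root 3 L / 4" by (rule LIMSEQ_unique)
  have "L = 1/8"
  proof -
    have "(root 3 L)^3 = L" using Lpos by (simp add: real_root_pow_pos)
    moreover have "4*L = root 3 L" using fixL by simp
    ultimately have "(4*L)^3 = L" by simp
    then have "L * (64*L^2 - 1) = 0" by (simp add: algebra_simps power3_eq_cube power2_eq_square)
    then have "64*L^2 = 1" using Lpos by simp
    moreover have "(1/8::real)^2 = 1/64" by (simp add: power2_eq_square)
    ultimately have "L^2 = (1/8)^2" by linarith
    then show ?thesis using Lpos using power2_eq_iff_nonneg[of L "1/8"] by simp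
  qed
  have "(\<lambda>i. 1/8 - s i) \<longlonglongrightarrow> 1/8 - L" by (intro tendsto_intros L)
  then have dd: "(\<lambda>i. 1/8 - s i) \<longlonglongrightarrow> 0" using \<open>L = 1/8\<close> by simp
  have "(\<lambda>i. infdist (phi Fsys (Suc i) y (\<lambda>_. 1)) QQ) \<longlonglongrightarrow> 0"
  proof (rule real_tendsto_sandwich[OF _ _ tendsto_const dd])
    show "\<forall>\<^sub>F i in sequentially. 0 \<le> infdist (phi Fsys (Suc i) y (\<lambda>_. 1)) QQ"
      by (simp add: infdist_nonneg)
    show "\<forall>\<^sub>F i in sequentially. infdist (phi Fsys (Suc i) y (\<lambda>_. 1)) QQ \<le> 1/8 - s i"
    proof (intro always_eventually allI)
      fix i
      have "infdist (phi Fsys (Suc i) y (\<lambda>_. 1)) QQ \<le> dist (phi Fsys (Suc i) y (\<lambda>_. 1)) (1/4)"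
        by (rule infdist_le) simp
      also have "\<dots> = 1/8 - s i" using bdd[of i] by (simp add: s_def dist_real_def)
      finally show "infdist (phi Fsys (Suc i) y (\<lambda>_. 1)) QQ \<le> 1/8 - s i" .
    qed
  qed
  then show ?thesis by (rule LIMSEQ_imp_Suc)
qed

lemma bad_exists:
  assumes "\<delta> > 0"
  shows "\<exists>y\<in>ball (3/8) \<delta> \<inter> QQ. ereal (1/16) \<le> mean_dist Fsys QQ y \<omega>"
proof (cases "\<exists>k. \<omega> k \<noteq> 0")
  case True
  define k where "k = (LEAST k. \<omega> k \<noteq> 0)"
  have wk: "\<omega> k \<noteq> 0" unfolding k_def by (rule LeastI_ex[OF True])
  have before: "\<omega> i = 0" if "i < k" for i using not_less_Least[of i "\<lambda>k. \<omega> k \<noteq> 0"] that k_def by auto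
  have fixed: "i \<le> k \<Longrightarrow> phi Fsys i (3/8) \<omega> = 3/8" for i
  proof (induction i)
    case 0 then show ?case by simp
  next
    case (Suc i) then show ?case using before[of i] by (simp add: Fsys_def F0_def)
  qed
  have "phi Fsys (Suc k) (3/8) \<omega> = 1/8" using fixed[of k] wk by (simp add: Fsys_def F1_def)
  then have "ereal (1/16) \<le> mean_dist Fsys QQ (3/8) \<omega>" by (intro bad_mean[of "Suc k"]) auto
  moreover have "(3/8::real) \<in> ball (3/8) \<delta> \<inter> QQ" using assms by auto
  ultimately show ?thesis by blast
next
  case False
  then have w0: "\<omega> i = 0" for i by auto
  obtain m where m: "(1/2::real)^m < \<delta>" using real_arch_pow_inv[OF assms, of "1/2"] by auto
  define y where "y = 3/8 - (1/2::real)^m / 8"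
  have traj: "j \<le> m \<Longrightarrow> phi Fsys j y \<omega> = 3/8 - (1/2::real)^(m-j) / 8" for j
  proof (induction j)
    case 0 then show ?case by (simp add: y_def)
  next
    case (Suc j)
    define a where "a = (1/2::real)^(m - Suc j)"
    have mj: "m - j = Suc (m - Suc j)" using Suc by simp
    have ph: "phi Fsys j y \<omega> = 3/8 - a/16" using Suc mj by (simp add: a_def)
    have a0: "0 < a" "a \<le> 1" by (auto simp: a_def power_le_one)
    have "phi Fsys (Suc j) y \<omega> = F0 (3/8 - a/16)" using ph w0[of j] by (simp add: Fsys_def)
    also have "\<dots> = 3/8 - a/8" using a0 by (simp add: F0_def)
    finally show ?case by (simp add: a_def)
  qed
  have "phi Fsys m y \<omega> = 1/4" using traj[of m] by simp
  then have "phi Fsys (Suc m) y \<omega> = 1/8" using w0[of m] by (simp add: Fsys_def F0_def)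
  then have "ereal (1/16) \<le> mean_dist Fsys QQ y \<omega>" by (intro bad_mean[of "Suc m"]) auto
  moreover have "y \<in> ball (3/8) \<delta> \<inter> QQ"
  proof -
    have "(1/2::real)^m \<le> 1" by (simp add: power_le_one)
    moreover have "(0::real) < (1/2)^m" by simp
    ultimately have "0 < (1/2::real)^m" "(1/2::real)^m \<le> 1" "(1/2::real)^m < \<delta>" using m by auto
    moreover have "\<And>p::real. 0 < p \<Longrightarrow> p \<le> 1 \<Longrightarrow> p < \<delta> \<Longrightarrow> 3/8 - p/8 \<in> ball (3/8) \<delta> \<inter> QQ"
      using assms by (auto simp: dist_real_def)
    ultimately show ?thesis unfolding y_def by blast
  qed
  ultimately show ?thesis by blast
qed

lemma not_mei: "\<not> mei_point Fsys {0, 1} {1/4..1/2} (3/8)"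
proof
  assume "mei_point Fsys {0, 1} {1/4..1/2} (3/8)"
  then have "\<forall>\<epsilon>>0. \<exists>\<delta>>0. \<exists>\<omega>\<in>controls {0::nat, 1}. \<forall>y\<in>ball (3/8) \<delta> \<inter> QQ. mean_dist Fsys QQ y \<omega> < ereal \<epsilon>"
    unfolding mei_point_def by blast
  then have "\<exists>\<delta>>0. \<exists>\<omega>\<in>controls {0::nat, 1}. \<forall>y\<in>ball (3/8) \<delta> \<inter> QQ. mean_dist Fsys QQ y \<omega> < ereal (1/16)"
    by (metis divide_pos_pos zero_less_numeral zero_less_one)
  then obtain \<delta> \<omega> where d: "\<delta> > 0" and H: "\<forall>y\<in>ball (3/8) \<delta> \<inter> QQ. mean_dist Fsys QQ y \<omega> < ereal (1/16)"
    by blast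
  obtain y where "y \<in> ball (3/8) \<delta> \<inter> QQ" "ereal (1/16) \<le> mean_dist Fsys QQ y \<omega>"
    using bad_exists[OF d] by blast
  with H show False by (meson not_le)
qed

lemma fmei: "fmei_set Fsys {0, 1} {1/4..1/2}"
  unfolding fmei_set_def fmei_point_def
proof (intro ballI conjI)
  fix x :: real
  assume "x \<in> QQ"
  then show "x \<in> QQ" by simp
  show "\<forall>\<epsilon>>0. \<exists>\<delta>>0. \<exists>S. finite S \<and> S \<subseteq> controls {0, 1} \<and>
            (\<forall>y\<in>ball x \<delta> \<inter> QQ. \<exists>\<omega>\<in>S. mean_dist Fsys QQ y \<omega> < ereal \<epsilon>)"
  proof (intro allI impI)
  fix \<epsilon> :: real assume "\<epsilon> > 0"
  show "\<exists>\<delta>>0. \<exists>S. finite S \<and> S \<subseteq> controls {0, 1} \<and>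
            (\<forall>y\<in>ball x \<delta> \<inter> QQ. \<exists>\<omega>\<in>S. mean_dist Fsys QQ y \<omega> < ereal \<epsilon>)"
  proof (intro exI conjI)
    show "(1::real) > 0" by simp
    show "finite {(\<lambda>_. 0::nat), (\<lambda>_. 1)}" by simp
    show "{(\<lambda>_. 0::nat), (\<lambda>_. 1)} \<subseteq> controls {0, 1}" by (auto simp: controls_def)
    show "\<forall>y\<in>ball x 1 \<inter> QQ. \<exists>\<omega>\<in>{(\<lambda>_. 0::nat), (\<lambda>_. 1)}. mean_dist Fsys QQ y \<omega> < ereal \<epsilon>"
    proof
      fix y assume y: "y \<in> ball x 1 \<inter> QQ"
      show "\<exists>\<omega>\<in>{(\<lambda>_. 0::nat), (\<lambda>_. 1)}. mean_dist Fsys QQ y \<omega> < ereal \<epsilon>"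
      proof (cases "y < 3/8")
        case True
        have "mean_dist Fsys QQ y (\<lambda>_. 1) < ereal \<epsilon>"
          by (rule mean_zero[OF ones_tendsto \<open>\<epsilon> > 0\<close>]) (use y True in auto)
        then show ?thesis by blast
      next
        case False
        have "infdist (phi Fsys i y (\<lambda>_. 0)) QQ = 0" for i
          using hi_inv[of y i] y False by (intro infdist_zero) auto
        then have "mean_dist Fsys QQ y (\<lambda>_. 0) < ereal \<epsilon>"
          by (intro mean_zero[OF _ \<open>\<epsilon> > 0\<close>]) simp
        then show ?thesis by blast
      qed
    qed
  qed
  qed
qed

theorem mainTheorem17:
  shows "fmei_set Fsys {0, 1} {1/4..1/2} \<and> \<not> mei_set Fsys {0, 1} {1/4..1/2}
         \<and> \<not> mei_point Fsys {0, 1} {1/4..1/2} (3/8)"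
  using fmei not_mei unfolding mei_set_def by auto

end
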